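(* Consider a 1DPNN as described in the context, with $L\ge 2$ layers and a differentiable loss $\epsilon$. For every $l\in\{1,\dots,L-1\}$ and every $j\in\{1,\dots,N_l\}$, $$\frac{\partial \epsilon}{\partial y_{j}^{(l)}}=\sum_{d=1}^{D_{l+1}}d\left(\sum_{i=1}^{N_{l+1}}\tilde{w}_{ijd}^{(l+1)}*g_i^{(l+1)}\right)\odot\left(y_{j}^{(l)}\right)^{d-1},$$ where $\tilde{w}_{ijd}^{(l+1)}\in\mathbb{R}^{K_{l+1}}$ is given by $\tilde{w}_{ijd}^{(l+1)}(k)=w_{ijd}^{(l+1)}(K_{l+1}-1-k)$ for $k\in\{0,\dots,K_{l+1}-1\}$, and $g_i^{(l+1)}\in\mathbb{R}^{M_l+K_{l+1}-1}$ is the zero-padded vector defined for $n\in\{0,\dots,M_l+K_{l+1}-2\}$ by $g_i^{(l+1)}(n)=\frac{\partial \epsilon}{\partial x_i^{(l+1)}}(n-K_{l+1}+1)$ if $K_{l+1}-1\le n\le M_{l+1}+K_{l+1}-2$, and $g_i^{(l+1)}(n)=0$ otherwise. (Here $(y_j^{(l)})^0$ is the all-ones vector.)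
   Context: A 1DPNN with $L\ge 1$ layers is specified as follows. Layer $0$ is the input: $N_0$ signals $y_1^{(0)},\dots,y_{N_0}^{(0)}\in\mathbb{R}^{M_0}$ (entries indexed $0,\dots,M_0-1$). For each layer $l\in\{1,\dots,L\}$ there are positive integers $N_l$ (number of neurons), $K_l$ (kernel size) and $D_l$ (polynomial degree), with $M_l=M_{l-1}-K_l+1\ge 1$. Neuron $i$ of layer $l$ has weight vectors $w_{ijd}^{(l)}\in\mathbb{R}^{K_l}$ (entries indexed $0,\dots,K_l-1$) for $j\in\{1,\dots,N_{l-1}\}$, $d\in\{1,\dots,D_l\}$, a bias $b_i^{(l)}\in\mathbb{R}$, and a differentiable activation function $f_i^{(l)}:\mathbb{R}\to\mathbb{R}$ applied componentwise. Its pre-activation output $x_i^{(l)}\in\mathbb{R}^{M_l}$ and output $y_i^{(l)}\in\mathbb{R}^{M_l}$ are $$x_i^{(l)}(m)=\sum_{j=1}^{N_{l-1}}\sum_{d=1}^{D_l}\sum_{k=0}^{K_l-1}w_{ijd}^{(l)}(k)\,\big(y_j^{(l-1)}(m+k)\big)^d+b_i^{(l)},\qquad y_i^{(l)}=f_i^{(l)}\big(x_i^{(l)}\big),$$ for $m\in\{0,\dots,M_l-1\}$. Notation: $\odot$ is the componentwise (Hadamard) product, powers of vectors are componentwise, and for $a\in\mathbb{R}^{K}$, $b\in\mathbb{R}^{M'}$ with $M'\ge K$, $a*b\in\mathbb{R}^{M'-K+1}$ is defined by $(a*b)(m)=\sum_{k=0}^{K-1}a(k)\,b(m+k)$ (this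 operation is called convolution). A differentiable loss $\epsilon$ is a function of the network output $(y_1^{(L)},\dots,y_{N_L}^{(L)})$ (and a fixed desired output); for each layer $l$ it is viewed as a differentiable function of the outputs $y_1^{(l)},\dots,y_{N_l}^{(l)}$ of layer $l$, with all subsequent layers computed by the forward propagation above. $\frac{\partial\epsilon}{\partial y_i^{(l)}}\in\mathbb{R}^{M_l}$ denotes the vector of partial derivatives of $\epsilon$ with respect to the entries of $y_i^{(l)}$ in this sense, and $\frac{\partial\epsilon}{\partial x_i^{(l)}}=\frac{\partial \epsilon}{\partial y_{i}^{(l)}}\odot (f_i^{(l)})'(x_i^{(l)})$ (derivative applied componentwise). *)

theory Defs
  imports "HOL-Analysis.Analysis"
begin

text \<open>Signals of a layer are functions nat => nat => real: Y i m is entry m of the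
 output of neuron i (neurons indexed 1..N l, entries 0..M l - 1).\<close>

definition conv :: "nat \<Rightarrow> (nat \<Rightarrow> real) \<Rightarrow> (nat \<Rightarrow> real) \<Rightarrow> nat \<Rightarrow> real" where
  "conv Kk a v m = (\<Sum>k<Kk. a k * v (m + k))"

definition pre_act ::
  "(nat \<Rightarrow> nat) \<Rightarrow> (nat \<Rightarrow> nat) \<Rightarrow> (nat \<Rightarrow> nat) \<Rightarrow>
   (nat \<Rightarrow> nat \<Rightarrow> nat \<Rightarrow> nat \<Rightarrow> nat \<Rightarrow> real) \<Rightarrow> (nat \<Rightarrow> nat \<Rightarrow> real) \<Rightarrow>
   nat \<Rightarrow> (nat \<Rightarrow> nat \<Rightarrow> real) \<Rightarrow> nat \<Rightarrow> nat \<Rightarrow> real" where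
  "pre_act N K D w b l Y i m =
     (\<Sum>j=1..N (l-1). \<Sum>d=1..D l. \<Sum>k<K l. w l i j d k * (Y j (m + k)) ^ d) + b l i"

definition layer ::
  "(nat \<Rightarrow> nat) \<Rightarrow> (nat \<Rightarrow> nat) \<Rightarrow> (nat \<Rightarrow> nat) \<Rightarrow> (nat \<Rightarrow> nat) \<Rightarrow>
   (nat \<Rightarrow> nat \<Rightarrow> nat \<Rightarrow> nat \<Rightarrow> nat \<Rightarrow> real) \<Rightarrow> (nat \<Rightarrow> nat \<Rightarrow> real) \<Rightarrow>
   (nat \<Rightarrow> nat \<Rightarrow> real \<Rightarrow> real) \<Rightarrow> nat \<Rightarrow> (nat \<Rightarrow> nat \<Rightarrow> real) \<Rightarrow> nat \<Rightarrow> nat \<Rightarrow> real" where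
  "layer N M K D w b f l Y =
     (\<lambda>i m. if 1 \<le> i \<and> i \<le> N l \<and> m < M l then f l i (pre_act N K D w b l Y i m) else 0)"

primrec fwd ::
  "(nat \<Rightarrow> nat) \<Rightarrow> (nat \<Rightarrow> nat) \<Rightarrow> (nat \<Rightarrow> nat) \<Rightarrow> (nat \<Rightarrow> nat) \<Rightarrow>
   (nat \<Rightarrow> nat \<Rightarrow> nat \<Rightarrow> nat \<Rightarrow> nat \<Rightarrow> real) \<Rightarrow> (nat \<Rightarrow> nat \<Rightarrow> real) \<Rightarrow>
   (nat \<Rightarrow> nat \<Rightarrow> real \<Rightarrow> real) \<Rightarrow> nat \<Rightarrow> nat \<Rightarrow> (nat \<Rightarrow> nat \<Rightarrow> real) \<Rightarrow> nat \<Rightarrow> nat \<Rightarrow> real" where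
  "fwd N M K D w b f l 0 Y = Y"
| "fwd N M K D w b f l (Suc n) Y = fwd N M K D w b f (Suc l) n (layer N M K D w b f (Suc l) Y)"

primrec outputs ::
  "(nat \<Rightarrow> nat) \<Rightarrow> (nat \<Rightarrow> nat) \<Rightarrow> (nat \<Rightarrow> nat) \<Rightarrow> (nat \<Rightarrow> nat) \<Rightarrow>
   (nat \<Rightarrow> nat \<Rightarrow> nat \<Rightarrow> nat \<Rightarrow> nat \<Rightarrow> real) \<Rightarrow> (nat \<Rightarrow> nat \<Rightarrow> real) \<Rightarrow>
   (nat \<Rightarrow> nat \<Rightarrow> real \<Rightarrow> real) \<Rightarrow> (nat \<Rightarrow> nat \<Rightarrow> real) \<Rightarrow> nat \<Rightarrow> nat \<Rightarrow> nat \<Rightarrow> real" where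
  "outputs N M K D w b f y0 0 = y0"
| "outputs N M K D w b f y0 (Suc l) = layer N M K D w b f (Suc l) (outputs N M K D w b f y0 l)"

definition loss_at ::
  "nat \<Rightarrow> (nat \<Rightarrow> nat) \<Rightarrow> (nat \<Rightarrow> nat) \<Rightarrow> (nat \<Rightarrow> nat) \<Rightarrow> (nat \<Rightarrow> nat) \<Rightarrow>
   (nat \<Rightarrow> nat \<Rightarrow> nat \<Rightarrow> nat \<Rightarrow> nat \<Rightarrow> real) \<Rightarrow> (nat \<Rightarrow> nat \<Rightarrow> real) \<Rightarrow>
   (nat \<Rightarrow> nat \<Rightarrow> real \<Rightarrow> real) \<Rightarrow> ((nat \<Rightarrow> nat \<Rightarrow> real) \<Rightarrow> real) \<Rightarrow>
   nat \<Rightarrow> (nat \<Rightarrow> nat \<Rightarrow> real) \<Rightarrow> real" where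
  "loss_at L N M K D w b f \<epsilon> l Y = \<epsilon> (fwd N M K D w b f l (L - l) Y)"

definition perturb :: "(nat \<Rightarrow> nat \<Rightarrow> real) \<Rightarrow> nat \<Rightarrow> nat \<Rightarrow> real \<Rightarrow> nat \<Rightarrow> nat \<Rightarrow> real" where
  "perturb Y j m t = Y(j := (Y j)(m := Y j m + t))"

definition dE_dy ::
  "nat \<Rightarrow> (nat \<Rightarrow> nat) \<Rightarrow> (nat \<Rightarrow> nat) \<Rightarrow> (nat \<Rightarrow> nat) \<Rightarrow> (nat \<Rightarrow> nat) \<Rightarrow>
   (nat \<Rightarrow> nat \<Rightarrow> nat \<Rightarrow> nat \<Rightarrow> nat \<Rightarrow> real) \<Rightarrow> (nat \<Rightarrow> nat \<Rightarrow> real) \<Rightarrow>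
   (nat \<Rightarrow> nat \<Rightarrow> real \<Rightarrow> real) \<Rightarrow> ((nat \<Rightarrow> nat \<Rightarrow> real) \<Rightarrow> real) \<Rightarrow> (nat \<Rightarrow> nat \<Rightarrow> real) \<Rightarrow>
   nat \<Rightarrow> nat \<Rightarrow> nat \<Rightarrow> real" where
  "dE_dy L N M K D w b f \<epsilon> y0 l i m =
     deriv (\<lambda>t. loss_at L N M K D w b f \<epsilon> l (perturb (outputs N M K D w b f y0 l) i m t)) 0"

definition dE_dx ::
  "nat \<Rightarrow> (nat \<Rightarrow> nat) \<Rightarrow> (nat \<Rightarrow> nat) \<Rightarrow> (nat \<Rightarrow> nat) \<Rightarrow> (nat \<Rightarrow> nat) \<Rightarrow>
   (nat \<Rightarrow> nat \<Rightarrow> nat \<Rightarrow> nat \<Rightarrow> nat \<Rightarrow> real) \<Rightarrow> (nat \<Rightarrow> nat \<Rightarrow> real) \<Rightarrow>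
   (nat \<Rightarrow> nat \<Rightarrow> real \<Rightarrow> real) \<Rightarrow> ((nat \<Rightarrow> nat \<Rightarrow> real) \<Rightarrow> real) \<Rightarrow> (nat \<Rightarrow> nat \<Rightarrow> real) \<Rightarrow>
   nat \<Rightarrow> nat \<Rightarrow> nat \<Rightarrow> real" where
  "dE_dx L N M K D w b f \<epsilon> y0 l i m =
     dE_dy L N M K D w b f \<epsilon> y0 l i m *
     deriv (f l i) (pre_act N K D w b l (outputs N M K D w b f y0 (l - 1)) i m)"

text \<open>Frechet differentiability of a loss on R^(N x M), written out for signals
 represented as functions vanishing outside the index box {1..N} x {0..M-1}.\<close>
definition in_box :: "nat \<Rightarrow> nat \<Rightarrow> (nat \<Rightarrow> nat \<Rightarrow> real) \<Rightarrow> bool" where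
  "in_box Nn Mm H \<longleftrightarrow> (\<forall>i m. \<not> (1 \<le> i \<and> i \<le> Nn \<and> m < Mm) \<longrightarrow> H i m = 0)"

definition box_norm :: "nat \<Rightarrow> nat \<Rightarrow> (nat \<Rightarrow> nat \<Rightarrow> real) \<Rightarrow> real" where
  "box_norm Nn Mm H = sqrt (\<Sum>i=1..Nn. \<Sum>m<Mm. (H i m)\<^sup>2)"

definition loss_differentiable :: "nat \<Rightarrow> nat \<Rightarrow> ((nat \<Rightarrow> nat \<Rightarrow> real) \<Rightarrow> real) \<Rightarrow> bool" where
  "loss_differentiable Nn Mm \<epsilon> \<longleftrightarrow>
     (\<forall>Y. in_box Nn Mm Y \<longrightarrow>
        (\<exists>G. \<forall>e>0. \<exists>\<delta>>0. \<forall>H. in_box Nn Mm H \<longrightarrow> box_norm Nn Mm H < \<delta> \<longrightarrow>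
           \<bar>\<epsilon> (\<lambda>i m. Y i m + H i m) - \<epsilon> Y - (\<Sum>i=1..Nn. \<Sum>m<Mm. G i m * H i m)\<bar>
             \<le> e * box_norm Nn Mm H))"

end

theory Submission
  imports Defs "HOL-Library.Function_Algebras"
begin

lemma tendsto_fun_iff:
  fixes f :: "'a \<Rightarrow> 'b \<Rightarrow> 'c::topological_space"
  shows "(f \<longlongrightarrow> l) F \<longleftrightarrow> (\<forall>i. ((\<lambda>x. f x i) \<longlongrightarrow> l i) F)"
  using limitin_componentwise[of "\<lambda>_. euclidean" UNIV f l F]
  by (simp add: euclidean_product_topology)

definition supp_in :: "(nat \<times> nat) set \<Rightarrow> (nat \<Rightarrow> nat \<Rightarrow> real) \<Rightarrow> bool" where
  "supp_in S H \<longleftrightarrow> (\<forall>i m. (i, m) \<notin> S \<longrightarrow> H i m = 0)"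

definition flt :: "(nat \<times> nat) set \<Rightarrow> (nat \<Rightarrow> nat \<Rightarrow> real) filter" where
  "flt S = inf (nhds 0) (principal {H. supp_in S H})"

definition carat :: "(nat \<times> nat) set \<Rightarrow> ((nat \<Rightarrow> nat \<Rightarrow> real) \<Rightarrow> real) \<Rightarrow> (nat \<Rightarrow> nat \<Rightarrow> real)
   \<Rightarrow> (nat \<times> nat \<Rightarrow> real) \<Rightarrow> bool" where
  "carat S F Y G \<longleftrightarrow> (\<exists>\<phi>. (\<forall>H. supp_in S H \<longrightarrow>
      F (\<lambda>i m. Y i m + H i m) - F Y = (\<Sum>s\<in>S. \<phi> s H * H (fst s) (snd s))) \<and>
      (\<forall>s\<in>S. (\<phi> s \<longlongrightarrow> G s) (flt S)))"

lemma eval_tendsto_nhds: "((\<lambda>H::nat \<Rightarrow> nat \<Rightarrow> real. H i m) \<longlongrightarrow> 0) (nhds 0)"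
proof -
  have "((\<lambda>H::nat \<Rightarrow> nat \<Rightarrow> real. H) \<longlongrightarrow> 0) (nhds 0)" by (rule filterlim_ident)
  then have "((\<lambda>H::nat \<Rightarrow> nat \<Rightarrow> real. H i) \<longlongrightarrow> 0 i) (nhds 0)"
    by (rule tendsto_fun_iff[THEN iffD1, rule_format])
  then have "((\<lambda>H::nat \<Rightarrow> nat \<Rightarrow> real. H i m) \<longlongrightarrow> 0 i m) (nhds 0)"
    by (rule tendsto_fun_iff[THEN iffD1, rule_format])
  then show ?thesis by simp
qed

lemma eval_tendsto [tendsto_intros]: "((\<lambda>H. H i m) \<longlongrightarrow> 0) (flt S)"
proof -
  have "flt S \<le> nhds 0" unfolding flt_def by (rule inf_le1)
  then show ?thesis using eval_tendsto_nhds by (rule tendsto_mono)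
qed

lemma eventually_flt_supp: "eventually (\<lambda>H. supp_in S H) (flt S)"
  unfolding flt_def by (simp add: eventually_inf_principal)

lemma filterlim_flt:
  assumes "\<And>i m. ((\<lambda>x. E x i m) \<longlongrightarrow> 0) F" "eventually (\<lambda>x. supp_in S (E x)) F"
  shows "filterlim E (flt S) F"
proof -
  have "(E \<longlongrightarrow> 0) F" using assms(1) by (simp add: tendsto_fun_iff)
  then show ?thesis unfolding flt_def using assms(2)
    by (simp add: filterlim_inf filterlim_principal)
qed

lemma carat_partial:
  assumes c: "carat S F Y G" and jm: "(j, m) \<in> S" and fin: "finite S"
  shows "((\<lambda>t. F (perturb Y j m t)) has_real_derivative G (j, m)) (at 0)"
proof -
  obtain \<phi> where phi: "\<And>H. supp_in S H \<Longrightarrow>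
      F (\<lambda>i m. Y i m + H i m) - F Y = (\<Sum>s\<in>S. \<phi> s H * H (fst s) (snd s))"
    and lim: "\<And>s. s \<in> S \<Longrightarrow> (\<phi> s \<longlongrightarrow> G s) (flt S)"
    using c unfolding carat_def by blast
  define E where "E t = (\<lambda>i n. if i = j \<and> n = m then t else (0::real))" for t
  have P: "perturb Y j m t = (\<lambda>i n. Y i n + E t i n)" for t
    unfolding perturb_def E_def by (auto simp: fun_eq_iff)
  have P0: "perturb Y j m 0 = Y" unfolding perturb_def by (auto simp: fun_eq_iff)
  have suppE: "supp_in S (E t)" for t using jm unfolding supp_in_def E_def by auto
  have diff: "F (perturb Y j m t) - F (perturb Y j m 0) = \<phi> (j, m) (E t) * t" for t
  proof -
    have "F (perturb Y j m t) - F (perturb Y j m 0) = (\<Sum>s\<in>S. \<phi> s (E t) * E t (fst s) (snd s))"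
      unfolding P0 by (subst P) (rule phi[OF suppE])
    also have "\<dots> = (\<Sum>s\<in>S. if s = (j, m) then \<phi> s (E t) * t else 0)"
      by (rule sum.cong) (auto simp: E_def)
    also have "\<dots> = \<phi> (j, m) (E t) * t" using jm fin by simp
    finally show ?thesis .
  qed
  have fE: "filterlim E (flt S) (at 0)"
  proof (rule filterlim_flt)
    fix i n show "((\<lambda>x. E x i n) \<longlongrightarrow> 0) (at 0)"
    proof (cases "i = j \<and> n = m")
      case True then show ?thesis by (simp add: E_def tendsto_ident_at)
    next
      case False then show ?thesis unfolding E_def by (simp only: if_False) simp
    qed
  qed (simp add: suppE)
  have "((\<lambda>t. \<phi> (j, m) (E t)) \<longlongrightarrow> G (j, m)) (at 0)"
    using tendsto_compose_filtermap lim[OF jm] fE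
    by (metis filterlim_compose)
  then have "((\<lambda>t. (F (perturb Y j m t) - F (perturb Y j m 0)) / (t - 0)) \<longlongrightarrow> G (j, m)) (at 0)"
  proof (rule Lim_transform_eventually)
    show "\<forall>\<^sub>F t in at 0. \<phi> (j, m) (E t) = (F (perturb Y j m t) - F (perturb Y j m 0)) / (t - 0)"
      unfolding eventually_at_filter by (rule always_eventually) (simp add: diff)
  qed
  then show ?thesis by (simp add: has_field_derivative_iff)
qed

definition bx :: "nat \<Rightarrow> nat \<Rightarrow> (nat \<times> nat) set" where
  "bx Nn Mm = {1..Nn} \<times> {..<Mm}"

lemma finite_bx[simp]: "finite (bx Nn Mm)" by (simp add: bx_def)

lemma in_box_supp: "in_box Nn Mm H \<longleftrightarrow> supp_in (bx Nn Mm) H"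
  unfolding in_box_def supp_in_def bx_def by auto

lemma box_norm_sum: "box_norm Nn Mm H = sqrt (\<Sum>s\<in>bx Nn Mm. (H (fst s) (snd s))\<^sup>2)"
  unfolding box_norm_def bx_def by (simp add: sum.cartesian_product case_prod_beta)

lemma comp_le_norm:
  assumes "finite S" "s \<in> S"
  shows "\<bar>H (fst s) (snd s)\<bar> \<le> sqrt (\<Sum>s\<in>S. (H (fst s) (snd s))\<^sup>2)"
proof -
  have "(H (fst s) (snd s))\<^sup>2 \<le> (\<Sum>s\<in>S. (H (fst s) (snd s))\<^sup>2)"
    using assms by (intro member_le_sum) auto
  then show ?thesis using real_sqrt_le_mono by fastforce
qed


lemma frechet_carat:
  assumes Y: "in_box Nn Mm Y" and ed: "loss_differentiable Nn Mm \<epsilon>"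
  shows "\<exists>G. carat (bx Nn Mm) \<epsilon> Y G"
proof -
  let ?S = "bx Nn Mm"
  define nb where "nb H = sqrt (\<Sum>s\<in>?S. (H (fst s) (snd s))\<^sup>2)" for H :: "nat \<Rightarrow> nat \<Rightarrow> real"
  obtain G0 where G0: "\<And>e. e > 0 \<Longrightarrow> \<exists>\<delta>>0. \<forall>H. in_box Nn Mm H \<longrightarrow> box_norm Nn Mm H < \<delta> \<longrightarrow>
           \<bar>\<epsilon> (\<lambda>i m. Y i m + H i m) - \<epsilon> Y - (\<Sum>i=1..Nn. \<Sum>m<Mm. G0 i m * H i m)\<bar>
             \<le> e * box_norm Nn Mm H"
    using ed Y unfolding loss_differentiable_def by blast
  define G where "G s = G0 (fst s) (snd s)" for s
  have sumG: "(\<Sum>i=1..Nn. \<Sum>m<Mm. G0 i m * H i m) = (\<Sum>s\<in>?S. G s * H (fst s) (snd s))" for H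
    unfolding bx_def G_def by (simp add: sum.cartesian_product case_prod_beta)
  define r where "r H = \<epsilon> (\<lambda>i m. Y i m + H i m) - \<epsilon> Y - (\<Sum>s\<in>?S. G s * H (fst s) (snd s))" for H
  have rb: "\<And>e. e > 0 \<Longrightarrow> \<exists>\<delta>>0. \<forall>H. supp_in ?S H \<longrightarrow> nb H < \<delta> \<longrightarrow> \<bar>r H\<bar> \<le> e * nb H"
    using G0 unfolding r_def nb_def sumG in_box_supp box_norm_sum by blast
  define \<phi> where "\<phi> s H = G s + r H * H (fst s) (snd s) / (nb H)\<^sup>2" for s H
  have nb0: "H = 0" if "supp_in ?S H" "nb H = 0" for H
  proof -
    have "(\<Sum>s\<in>?S. (H (fst s) (snd s))\<^sup>2) = 0" using that(2) unfolding nb_def by simp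
    then have "\<forall>s\<in>?S. (H (fst s) (snd s))\<^sup>2 = 0"
      by (subst sum_nonneg_eq_0_iff[symmetric]) auto
    note z = this
    show ?thesis
    proof (intro ext)
      fix i n
      show "H i n = 0 i n"
      proof (cases "(i, n) \<in> ?S")
        case True
        from bspec[OF z True] show ?thesis by simp
      next
        case False
        then show ?thesis using that(1) unfolding supp_in_def by simp
      qed
    qed
  qed
  have ident: "\<epsilon> (\<lambda>i m. Y i m + H i m) - \<epsilon> Y = (\<Sum>s\<in>?S. \<phi> s H * H (fst s) (snd s))"
    if H: "supp_in ?S H" for H
  proof (cases "nb H = 0")
    case True
    then have "H = 0" using nb0 H by blast
    then show ?thesis by (simp add: \<phi>_def)
  next
    case False
    have sq: "(nb H)\<^sup>2 = (\<Sum>s\<in>?S. (H (fst s) (snd s))\<^sup>2)"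
      unfolding nb_def by (simp add: sum_nonneg)
    have "(\<Sum>s\<in>?S. \<phi> s H * H (fst s) (snd s)) =
        (\<Sum>s\<in>?S. G s * H (fst s) (snd s)) + r H / (nb H)\<^sup>2 * (\<Sum>s\<in>?S. (H (fst s) (snd s))\<^sup>2)"
      unfolding \<phi>_def by (simp add: algebra_simps power2_eq_square sum.distrib sum_distrib_left sum_divide_distrib)
    also have "\<dots> = (\<Sum>s\<in>?S. G s * H (fst s) (snd s)) + r H"
      using False by (simp add: sq[symmetric])
    finally show ?thesis unfolding r_def by simp
  qed
  have nbt: "(nb \<longlongrightarrow> 0) (flt ?S)"
  proof -
    have "(nb \<longlongrightarrow> sqrt (\<Sum>s\<in>?S. 0\<^sup>2)) (flt ?S)"
      unfolding nb_def by (intro tendsto_intros)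
    then show ?thesis by simp
  qed
  have lim: "(\<phi> s \<longlongrightarrow> G s) (flt ?S)" if s: "s \<in> ?S" for s
  proof -
    have "((\<lambda>H. r H * H (fst s) (snd s) / (nb H)\<^sup>2) \<longlongrightarrow> 0) (flt ?S)"
    proof (rule tendstoI)
      fix e :: real assume e: "e > 0"
      obtain \<delta> where d: "\<delta> > 0" "\<And>H. supp_in ?S H \<Longrightarrow> nb H < \<delta> \<Longrightarrow> \<bar>r H\<bar> \<le> (e/2) * nb H"
        using rb[of "e/2"] e by auto
      have ev1: "eventually (\<lambda>H. nb H < \<delta>) (flt ?S)"
        using nbt d(1) by (simp add: order_tendstoD(2))
      show "eventually (\<lambda>H. dist (r H * H (fst s) (snd s) / (nb H)\<^sup>2) 0 < e) (flt ?S)"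
        using ev1 eventually_flt_supp
      proof eventually_elim
        case (elim H)
        have hs: "\<bar>H (fst s) (snd s)\<bar> \<le> nb H" unfolding nb_def using s by (intro comp_le_norm) auto
        show ?case
        proof (cases "nb H = 0")
          case True then show ?thesis using e by simp
        next
          case False
          then have pos: "nb H > 0" unfolding nb_def by (simp add: sum_nonneg order_le_neq_trans)
          have "\<bar>r H * H (fst s) (snd s) / (nb H)\<^sup>2\<bar> = \<bar>r H\<bar> * \<bar>H (fst s) (snd s)\<bar> / (nb H)\<^sup>2"
            by (simp add: abs_mult)
          also have "\<dots> \<le> ((e/2) * nb H) * nb H / (nb H)\<^sup>2"
            using d(2)[OF elim(2) elim(1)] hs pos
            by (intro divide_right_mono mult_mono) auto
          also have "\<dots> = e/2" using pos by (simp add: power2_eq_square)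
          finally have "\<bar>r H * H (fst s) (snd s) / (nb H)\<^sup>2\<bar> \<le> e/2" .
          then show ?thesis unfolding dist_real_def diff_zero using e by linarith
        qed
      qed
    qed
    then have "((\<lambda>H. G s + r H * H (fst s) (snd s) / (nb H)\<^sup>2) \<longlongrightarrow> G s + 0) (flt ?S)"
      by (intro tendsto_intros)
    then show ?thesis unfolding \<phi>_def by simp
  qed
  have "carat ?S \<epsilon> Y G" unfolding carat_def
    by (intro exI[of _ \<phi>] conjI allI impI ballI ident lim)
  then show ?thesis by (intro exI[where x=G])
qed

lemma carat_chain:
  assumes finS: "finite S" and finT: "finite T"
    and cF: "carat T F (\<Phi> Y) G"
    and c\<Phi>: "\<And>t. t \<in> T \<Longrightarrow> carat S (\<lambda>Z. \<Phi> Z (fst t) (snd t)) Y (J t)"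
    and supp\<Phi>: "\<And>Z. supp_in T (\<Phi> Z)"
  shows "carat S (\<lambda>Z. F (\<Phi> Z)) Y (\<lambda>s. \<Sum>t\<in>T. G t * J t s)"
proof -
  obtain \<psi> where psi0: "(\<forall>H. supp_in T H \<longrightarrow>
      F (\<lambda>i m. \<Phi> Y i m + H i m) - F (\<Phi> Y) = (\<Sum>t\<in>T. \<psi> t H * H (fst t) (snd t))) \<and>
      (\<forall>t\<in>T. (\<psi> t \<longlongrightarrow> G t) (flt T))"
    using cF unfolding carat_def by (rule exE)
  have psi: "\<And>H. supp_in T H \<Longrightarrow>
      F (\<lambda>i m. \<Phi> Y i m + H i m) - F (\<Phi> Y) = (\<Sum>t\<in>T. \<psi> t H * H (fst t) (snd t))"
    and psil: "\<And>t. t \<in> T \<Longrightarrow> (\<psi> t \<longlongrightarrow> G t) (flt T)"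
    using psi0 by simp_all
  have "\<forall>t\<in>T. \<exists>\<phi>. (\<forall>H. supp_in S H \<longrightarrow>
      \<Phi> (\<lambda>i m. Y i m + H i m) (fst t) (snd t) - \<Phi> Y (fst t) (snd t) = (\<Sum>s\<in>S. \<phi> s H * H (fst s) (snd s))) \<and>
      (\<forall>s\<in>S. (\<phi> s \<longlongrightarrow> J t s) (flt S))"
  proof
    fix t assume "t \<in> T"
    from c\<Phi>[OF this] show "\<exists>\<phi>. (\<forall>H. supp_in S H \<longrightarrow>
      \<Phi> (\<lambda>i m. Y i m + H i m) (fst t) (snd t) - \<Phi> Y (fst t) (snd t) = (\<Sum>s\<in>S. \<phi> s H * H (fst s) (snd s))) \<and>
      (\<forall>s\<in>S. (\<phi> s \<longlongrightarrow> J t s) (flt S))"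
      unfolding carat_def .
  qed
  then obtain A where A0: "\<forall>t\<in>T. (\<forall>H. supp_in S H \<longrightarrow>
      \<Phi> (\<lambda>i m. Y i m + H i m) (fst t) (snd t) - \<Phi> Y (fst t) (snd t) = (\<Sum>s\<in>S. A t s H * H (fst s) (snd s))) \<and>
      (\<forall>s\<in>S. (A t s \<longlongrightarrow> J t s) (flt S))"
    by (rule bchoice[THEN exE])
  have A: "\<And>t H. t \<in> T \<Longrightarrow> supp_in S H \<Longrightarrow>
      \<Phi> (\<lambda>i m. Y i m + H i m) (fst t) (snd t) - \<Phi> Y (fst t) (snd t) = (\<Sum>s\<in>S. A t s H * H (fst s) (snd s))"
    and Al: "\<And>t s. t \<in> T \<Longrightarrow> s \<in> S \<Longrightarrow> (A t s \<longlongrightarrow> J t s) (flt S)"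
    using A0 by simp_all
  define D where "D H = (\<lambda>i n. \<Phi> (\<lambda>i m. Y i m + H i m) i n - \<Phi> Y i n)" for H
  have suppD: "supp_in T (D H)" for H
    using supp\<Phi> unfolding supp_in_def D_def by simp
  have PD: "(\<lambda>i m. \<Phi> Y i m + D H i m) = \<Phi> (\<lambda>i m. Y i m + H i m)" for H
    unfolding D_def by simp
  define \<phi> where "\<phi> s H = (\<Sum>t\<in>T. \<psi> t (D H) * A t s H)" for s H
  have ident: "F (\<Phi> (\<lambda>i m. Y i m + H i m)) - F (\<Phi> Y) = (\<Sum>s\<in>S. \<phi> s H * H (fst s) (snd s))"
    if H: "supp_in S H" for H
  proof -
    have "F (\<Phi> (\<lambda>i m. Y i m + H i m)) - F (\<Phi> Y) = (\<Sum>t\<in>T. \<psi> t (D H) * D H (fst t) (snd t))"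
      using psi[OF suppD, of H] unfolding PD .
    also have "\<dots> = (\<Sum>t\<in>T. \<psi> t (D H) * (\<Sum>s\<in>S. A t s H * H (fst s) (snd s)))"
      by (rule sum.cong) (auto simp: D_def A[OF _ H])
    also have "\<dots> = (\<Sum>t\<in>T. \<Sum>s\<in>S. \<psi> t (D H) * A t s H * H (fst s) (snd s))"
      by (simp add: sum_distrib_left mult.assoc)
    also have "\<dots> = (\<Sum>s\<in>S. \<Sum>t\<in>T. \<psi> t (D H) * A t s H * H (fst s) (snd s))"
      by (rule sum.swap)
    also have "\<dots> = (\<Sum>s\<in>S. \<phi> s H * H (fst s) (snd s))"
      unfolding \<phi>_def by (simp add: sum_distrib_right)
    finally show ?thesis .
  qed
  have Dl: "filterlim D (flt T) (flt S)"
  proof (rule filterlim_flt)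
    fix i n
    show "((\<lambda>H. D H i n) \<longlongrightarrow> 0) (flt S)"
    proof (cases "(i, n) \<in> T")
      case True
      have "((\<lambda>H. \<Sum>s\<in>S. A (i, n) s H * H (fst s) (snd s)) \<longlongrightarrow> (\<Sum>s\<in>S. J (i, n) s * 0)) (flt S)"
        by (intro tendsto_sum tendsto_mult Al[OF True] eval_tendsto)
      then have "((\<lambda>H. \<Sum>s\<in>S. A (i, n) s H * H (fst s) (snd s)) \<longlongrightarrow> 0) (flt S)" by simp
      then show ?thesis
      proof (rule Lim_transform_eventually)
        show "\<forall>\<^sub>F H in flt S. (\<Sum>s\<in>S. A (i, n) s H * H (fst s) (snd s)) = D H i n"
          using eventually_flt_supp
          by eventually_elim (use A[OF True] in \<open>auto simp: D_def\<close>)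
      qed
    next
      case False
      then show ?thesis using suppD unfolding supp_in_def by simp
    qed
  qed (simp add: suppD)
  have lim: "(\<phi> s \<longlongrightarrow> (\<Sum>t\<in>T. G t * J t s)) (flt S)" if s: "s \<in> S" for s
    unfolding \<phi>_def
  proof (intro tendsto_sum tendsto_mult)
    fix t assume t: "t \<in> T"
    show "((\<lambda>H. \<psi> t (D H)) \<longlongrightarrow> G t) (flt S)"
      using psil[OF t] Dl by (rule tendsto_compose_filtermap[THEN iffD2, rotated] | metis filterlim_compose)
    show "(A t s \<longlongrightarrow> J t s) (flt S)" by (rule Al[OF t s])
  qed
  show ?thesis unfolding carat_def
    by (intro exI[of _ \<phi>] conjI allI impI ballI ident lim)
qed

definition qd :: "real \<Rightarrow> real \<Rightarrow> nat \<Rightarrow> real" where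
  "qd a h d = (\<Sum>p<d. a ^ (d - 1 - p) * (a + h) ^ p)"

lemma qd_diff: "(a + h) ^ d - a ^ d = h * qd a h d"
  unfolding qd_def using power_diff_sumr2[of "a + h" d a] by simp

lemma qd_0: "qd a 0 d = real d * a ^ (d - 1)"
proof -
  have "qd a 0 d = (\<Sum>p<d. a ^ (d - 1))"
    unfolding qd_def by (rule sum.cong) (auto simp: power_add[symmetric])
  then show ?thesis by simp
qed

lemma qd_tendsto:
  "((\<lambda>H. qd a (H i n) d) \<longlongrightarrow> real d * a ^ (d - 1)) (flt S)"
proof -
  have "((\<lambda>H. qd a (H i n) d) \<longlongrightarrow> qd a 0 d) (flt S)"
    unfolding qd_def by (intro tendsto_intros)
  then show ?thesis by (simp add: qd_0)
qed

lemma shift_sum: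
  fixes g :: "nat \<Rightarrow> real"
  assumes "m' + Kk \<le> M0"
  shows "(\<Sum>k<Kk. g (m' + k)) = (\<Sum>n<M0. if m' \<le> n \<and> n < m' + Kk then g n else 0)"
proof -
  have "(\<Sum>n<M0. if m' \<le> n \<and> n < m' + Kk then g n else 0) = (\<Sum>n\<in>{m'..<m' + Kk}. g n)"
    using assms by (intro sum.mono_neutral_cong_right) auto
  also have "\<dots> = (\<Sum>k<Kk. g (m' + k))"
    using sum.shift_bounds_nat_ivl[of g 0 m' Kk] by (simp add: lessThan_atLeast0 add.commute)
  finally show ?thesis by simp
qed

lemma layer_carat:
  fixes q :: nat
  assumes MK: "M q + K q = M (q - 1) + 1"
    and fd: "\<And>i x. 1 \<le> i \<Longrightarrow> i \<le> N q \<Longrightarrow> f q i differentiable (at x)"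
    and t: "t \<in> bx (N q) (M q)"
  shows "carat (bx (N (q - 1)) (M (q - 1))) (\<lambda>Z. layer N M K D w b f q Z (fst t) (snd t)) Y
     (\<lambda>s. deriv (f q (fst t)) (pre_act N K D w b q Y (fst t) (snd t)) *
        (if snd t \<le> snd s \<and> snd s < snd t + K q
         then (\<Sum>d=1..D q. w q (fst t) (fst s) d (snd s - snd t) * (real d * Y (fst s) (snd s) ^ (d - 1)))
         else 0))"
proof -
  obtain i' m' where tt: "t = (i', m')" and i': "1 \<le> i'" "i' \<le> N q" and m': "m' < M q"
    using t unfolding bx_def by auto
  let ?S = "bx (N (q - 1)) (M (q - 1))"
  define x where "x Z = pre_act N K D w b q Z i' m'" for Z
  have dv: "DERIV (f q i') (x Y) :> deriv (f q i') (x Y)"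
    using fd[OF i'] DERIV_deriv_iff_real_differentiable by blast
  obtain g where g1: "\<And>z. f q i' z - f q i' (x Y) = g z * (z - x Y)" and g2: "isCont g (x Y)"
    and g3: "g (x Y) = deriv (f q i') (x Y)"
    using dv[unfolded CARAT_DERIV] by blast
  define c where "c s H = (if m' \<le> snd s \<and> snd s < m' + K q
      then (\<Sum>d=1..D q. w q i' (fst s) d (snd s - m') * qd (Y (fst s) (snd s)) (H (fst s) (snd s)) d)
      else 0)" for s and H :: "nat \<Rightarrow> nat \<Rightarrow> real"
  have mk: "m' + K q \<le> M (q - 1)" using MK m' by linarith
  have dx: "x (\<lambda>i m. Y i m + H i m) - x Y = (\<Sum>s\<in>?S. c s H * H (fst s) (snd s))" for H
  proof -
    have "x (\<lambda>i m. Y i m + H i m) - x Y = (\<Sum>j=1..N (q - 1). \<Sum>d=1..D q. \<Sum>k<K q.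
        w q i' j d k * ((Y j (m' + k) + H j (m' + k)) ^ d - Y j (m' + k) ^ d))"
      unfolding x_def pre_act_def by (simp add: sum_subtractf[symmetric] right_diff_distrib)
    also have "\<dots> = (\<Sum>j=1..N (q - 1). \<Sum>d=1..D q. \<Sum>k<K q.
        w q i' j d k * qd (Y j (m' + k)) (H j (m' + k)) d * H j (m' + k))"
      by (simp add: qd_diff mult_ac)
    also have "\<dots> = (\<Sum>j=1..N (q - 1). \<Sum>k<K q.
        (\<Sum>d=1..D q. w q i' j d k * qd (Y j (m' + k)) (H j (m' + k)) d) * H j (m' + k))"
      unfolding sum_distrib_right by (rule sum.cong[OF refl], rule sum.swap)
    also have "\<dots> = (\<Sum>j=1..N (q - 1). \<Sum>n<M (q - 1). if m' \<le> n \<and> n < m' + K q then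
        (\<Sum>d=1..D q. w q i' j d (n - m') * qd (Y j n) (H j n) d) * H j n else 0)"
    proof (rule sum.cong[OF refl])
      fix j
      show "(\<Sum>k<K q. (\<Sum>d=1..D q. w q i' j d k * qd (Y j (m' + k)) (H j (m' + k)) d) * H j (m' + k)) =
        (\<Sum>n<M (q - 1). if m' \<le> n \<and> n < m' + K q then
        (\<Sum>d=1..D q. w q i' j d (n - m') * qd (Y j n) (H j n) d) * H j n else 0)"
        using shift_sum[OF mk, of "\<lambda>n. (\<Sum>d=1..D q. w q i' j d (n - m') * qd (Y j n) (H j n) d) * H j n"]
        by simp
    qed
    also have "\<dots> = (\<Sum>s\<in>?S. c s H * H (fst s) (snd s))"
      unfolding bx_def c_def
      apply (simp add: sum.cartesian_product case_prod_beta)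
      apply (rule sum.cong[OF refl])
      by simp
    finally show ?thesis .
  qed
  have lay: "layer N M K D w b f q Z i' m' = f q i' (x Z)" for Z
    unfolding layer_def x_def using i' m' by simp
  define \<phi> where "\<phi> s H = g (x (\<lambda>i m. Y i m + H i m)) * c s H" for s H
  have ident: "layer N M K D w b f q (\<lambda>i m. Y i m + H i m) i' m' - layer N M K D w b f q Y i' m'
      = (\<Sum>s\<in>?S. \<phi> s H * H (fst s) (snd s))" for H
    unfolding lay g1 dx \<phi>_def by (simp add: sum_distrib_left mult_ac)
  have hx: "((\<lambda>H. x (\<lambda>i m. Y i m + H i m)) \<longlongrightarrow> x Y) (flt ?S)"
  proof -
    have "((\<lambda>H. x (\<lambda>i m. Y i m + H i m)) \<longlongrightarrow> x (\<lambda>i m. Y i m + (0::real))) (flt ?S)"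
      unfolding x_def pre_act_def by (intro tendsto_intros)
    then show ?thesis by simp
  qed
  have hg: "((\<lambda>H. g (x (\<lambda>i m. Y i m + H i m))) \<longlongrightarrow> g (x Y)) (flt ?S)"
    by (rule isCont_tendsto_compose[OF g2 hx])
  have hc: "(c s \<longlongrightarrow> (if m' \<le> snd s \<and> snd s < m' + K q
         then (\<Sum>d=1..D q. w q i' (fst s) d (snd s - m') * (real d * Y (fst s) (snd s) ^ (d - 1)))
         else 0)) (flt ?S)" for s
  proof (cases "m' \<le> snd s \<and> snd s < m' + K q")
    case True
    then show ?thesis unfolding c_def if_P[OF True] by (intro tendsto_intros qd_tendsto)
  next
    case False
    then show ?thesis unfolding c_def if_not_P[OF False] by simp
  qed
  show ?thesis unfolding tt fst_conv snd_conv
    unfolding carat_def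
    apply (intro exI[of _ \<phi>] conjI allI impI ballI)
     apply (rule ident)
    unfolding \<phi>_def x_def[symmetric] g3[symmetric]
    by (intro tendsto_mult hg hc)
qed

lemma conv_reindex:
  fixes a e :: "nat \<Rightarrow> real"
  assumes K1: "Kk \<ge> 1" and M1: "Mp \<ge> 1" and m: "m < Mp + Kk - 1"
  shows "conv Kk (\<lambda>k. a (Kk - 1 - k)) (\<lambda>n. if Kk - 1 \<le> n \<and> n \<le> Mp + Kk - 2 then e (n - (Kk - 1)) else 0) m
       = (\<Sum>m'<Mp. if m' \<le> m \<and> m < m' + Kk then a (m - m') * e m' else 0)"
proof -
  define h where "h k' = a k' * (if Kk - 1 \<le> m + Kk - 1 - k' \<and> m + Kk - 1 - k' \<le> Mp + Kk - 2
      then e (m + Kk - 1 - k' - (Kk - 1)) else 0)" for k'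
  have "conv Kk (\<lambda>k. a (Kk - 1 - k)) (\<lambda>n. if Kk - 1 \<le> n \<and> n \<le> Mp + Kk - 2 then e (n - (Kk - 1)) else 0) m
      = (\<Sum>k<Kk. h (Kk - Suc k))"
    unfolding conv_def h_def
  proof (rule sum.cong[OF refl])
    fix k assume "k \<in> {..<Kk}"
    then have k: "k < Kk" by simp
    have e1: "Kk - Suc k = Kk - 1 - k" by simp
    have e2: "m + Kk - 1 - (Kk - 1 - k) = m + k" using k by simp
    show "a (Kk - 1 - k) * (if Kk - 1 \<le> m + k \<and> m + k \<le> Mp + Kk - 2 then e (m + k - (Kk - 1)) else 0) =
      a (Kk - Suc k) * (if Kk - 1 \<le> m + Kk - 1 - (Kk - Suc k) \<and> m + Kk - 1 - (Kk - Suc k) \<le> Mp + Kk - 2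
         then e (m + Kk - 1 - (Kk - Suc k) - (Kk - 1)) else 0)"
      unfolding e1 e2 ..
  qed
  also have "\<dots> = (\<Sum>k<Kk. h k)" by (rule sum.nat_diff_reindex)
  also have "\<dots> = (\<Sum>k<Kk. if k \<le> m \<and> m - k < Mp then a k * e (m - k) else 0)"
  proof (rule sum.cong[OF refl])
    fix k assume "k \<in> {..<Kk}"
    then have k: "k < Kk" by simp
    have c: "(Kk - 1 \<le> m + Kk - 1 - k \<and> m + Kk - 1 - k \<le> Mp + Kk - 2) \<longleftrightarrow> (k \<le> m \<and> m - k < Mp)"
      using k K1 M1 by linarith
    have d: "k \<le> m \<Longrightarrow> m + Kk - 1 - k - (Kk - 1) = m - k" using k K1 by linarith
    show "h k = (if k \<le> m \<and> m - k < Mp then a k * e (m - k) else 0)"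
      unfolding h_def using c d by auto
  qed
  also have "\<dots> = sum (\<lambda>k. a k * e (m - k)) {k \<in> {..<Kk}. k \<le> m \<and> m - k < Mp}"
    by (rule sum.inter_filter[symmetric]) simp
  also have "\<dots> = sum (\<lambda>m'. a (m - m') * e m') {m' \<in> {..<Mp}. m' \<le> m \<and> m < m' + Kk}"
    by (rule sum.reindex_bij_witness[where i="\<lambda>x. m - x" and j="\<lambda>x. m - x"]) auto
  also have "\<dots> = (\<Sum>m'<Mp. if m' \<le> m \<and> m < m' + Kk then a (m - m') * e m' else 0)"
    by (rule sum.inter_filter) simp
  finally show ?thesis .
qed

definition Jl where
  "Jl N M K D w b f q Y t s = deriv (f q (fst t)) (pre_act N K D w b q Y (fst t) (snd t)) *
        (if snd t \<le> snd s \<and> snd s < snd t + K q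
         then (\<Sum>d=1..D q. w q (fst t) (fst s) d (snd s - snd t) * (real d * Y (fst s) (snd s) ^ (d - 1)))
         else 0)"

lemma layer_supp: "supp_in (bx (N q) (M q)) (layer N M K D w b f q Z)"
  unfolding supp_in_def bx_def layer_def by auto

lemma loss_step:
  assumes "k < L"
  shows "loss_at L N M K D w b f \<epsilon> k = (\<lambda>Z. loss_at L N M K D w b f \<epsilon> (Suc k) (layer N M K D w b f (Suc k) Z))"
proof -
  have "L - k = Suc (L - Suc k)" using assms by simp
  then show ?thesis unfolding loss_at_def by (simp add: fun_eq_iff)
qed

lemma loss_carat:
  assumes dims: "\<And>l. 1 \<le> l \<Longrightarrow> l \<le> L \<Longrightarrow>
       N l \<ge> 1 \<and> K l \<ge> 1 \<and> D l \<ge> 1 \<and> M l \<ge> 1 \<and> M l + K l = M (l - 1) + 1"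
    and f_diff: "\<And>l i x. 1 \<le> l \<Longrightarrow> l \<le> L \<Longrightarrow> 1 \<le> i \<Longrightarrow> i \<le> N l \<Longrightarrow>
       f l i differentiable (at x)"
    and eps_diff: "loss_differentiable (N L) (M L) \<epsilon>"
  shows "k \<le> L \<Longrightarrow> supp_in (bx (N k) (M k)) Y \<Longrightarrow>
     \<exists>G. carat (bx (N k) (M k)) (loss_at L N M K D w b f \<epsilon> k) Y G"
proof (induction "L - k" arbitrary: k Y)
  case 0
  then have kL: "k = L" by simp
  have "loss_at L N M K D w b f \<epsilon> k = \<epsilon>" using kL by (simp add: fun_eq_iff loss_at_def)
  then show ?case using frechet_carat[OF _ eps_diff] 0(3) kL in_box_supp by metis
next
  case (Suc n)
  then have kL: "k < L" by simp
  have IH: "\<exists>G. carat (bx (N (Suc k)) (M (Suc k))) (loss_at L N M K D w b f \<epsilon> (Suc k))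
       (layer N M K D w b f (Suc k) Y) G"
    using Suc(1)[of "Suc k" "layer N M K D w b f (Suc k) Y"] Suc(2) kL layer_supp by simp
  then obtain G where G: "carat (bx (N (Suc k)) (M (Suc k))) (loss_at L N M K D w b f \<epsilon> (Suc k))
       (layer N M K D w b f (Suc k) Y) G" by blast
  have MK: "M (Suc k) + K (Suc k) = M (Suc k - 1) + 1" using dims[of "Suc k"] kL by simp
  have fd: "\<And>i x. 1 \<le> i \<Longrightarrow> i \<le> N (Suc k) \<Longrightarrow> f (Suc k) i differentiable (at x)"
    using f_diff kL by simp
  have LC: "carat (bx (N k) (M k)) (\<lambda>Z. layer N M K D w b f (Suc k) Z (fst t) (snd t)) Y
      (Jl N M K D w b f (Suc k) Y t)" if "t \<in> bx (N (Suc k)) (M (Suc k))" for t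
    using layer_carat[where q="Suc k" and M=M and K=K and N=N and f=f and D=D and w=w and b=b and Y=Y,
       OF MK fd that] unfolding Jl_def by simp
  have "carat (bx (N k) (M k)) (\<lambda>Z. loss_at L N M K D w b f \<epsilon> (Suc k) (layer N M K D w b f (Suc k) Z)) Y
      (\<lambda>s. \<Sum>t\<in>bx (N (Suc k)) (M (Suc k)). G t * Jl N M K D w b f (Suc k) Y t s)"
    by (rule carat_chain[OF finite_bx finite_bx G LC layer_supp])
  then show ?case using loss_step[OF kL] by metis
qed

theorem proposition2:
  fixes L :: nat and N M K D :: "nat \<Rightarrow> nat"
    and w :: "nat \<Rightarrow> nat \<Rightarrow> nat \<Rightarrow> nat \<Rightarrow> nat \<Rightarrow> real"
    and b :: "nat \<Rightarrow> nat \<Rightarrow> real"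
    and f :: "nat \<Rightarrow> nat \<Rightarrow> real \<Rightarrow> real"
    and \<epsilon> :: "(nat \<Rightarrow> nat \<Rightarrow> real) \<Rightarrow> real"
    and y0 :: "nat \<Rightarrow> nat \<Rightarrow> real"
  assumes L2: "L \<ge> 2"
    and N0: "N 0 \<ge> 1" and M0: "M 0 \<ge> 1"
    and dims: "\<And>l. 1 \<le> l \<Longrightarrow> l \<le> L \<Longrightarrow>
       N l \<ge> 1 \<and> K l \<ge> 1 \<and> D l \<ge> 1 \<and> M l \<ge> 1 \<and> M l + K l = M (l - 1) + 1"
    and f_diff: "\<And>l i x. 1 \<le> l \<Longrightarrow> l \<le> L \<Longrightarrow> 1 \<le> i \<Longrightarrow> i \<le> N l \<Longrightarrow>
       f l i differentiable (at x)"
    and eps_diff: "loss_differentiable (N L) (M L) \<epsilon>"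
    and l: "1 \<le> l" "l \<le> L - 1"
    and j: "1 \<le> j" "j \<le> N l"
    and m: "m < M l"
  shows "((\<lambda>t. loss_at L N M K D w b f \<epsilon> l (perturb (outputs N M K D w b f y0 l) j m t))
          has_real_derivative
          (\<Sum>d=1..D (l + 1). real d *
             (\<Sum>i=1..N (l + 1).
                conv (K (l + 1))
                  (\<lambda>k. w (l + 1) i j d (K (l + 1) - 1 - k))
                  (\<lambda>n. if K (l + 1) - 1 \<le> n \<and> n \<le> M (l + 1) + K (l + 1) - 2
                       then dE_dx L N M K D w b f \<epsilon> y0 (l + 1) i (n - (K (l + 1) - 1))
                       else 0)
                  m)
             * (outputs N M K D w b f y0 l j m) ^ (d - 1)))
         (at 0)"
proof -
  define q where "q = l + 1"
  have qS: "q = Suc l" and q1: "q - 1 = l" unfolding q_def by simp_all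
  have lL: "l < L" "q \<le> L" "1 \<le> q" using l L2 unfolding q_def by auto
  let ?Y = "outputs N M K D w b f y0 l"
  let ?S = "bx (N l) (M l)" and ?T = "bx (N q) (M q)"
  have Yq: "outputs N M K D w b f y0 q = layer N M K D w b f q ?Y" unfolding qS by simp
  obtain G where G: "carat ?T (loss_at L N M K D w b f \<epsilon> q) (layer N M K D w b f q ?Y) G"
    using loss_carat[where k=q and Y="layer N M K D w b f q ?Y" and w=w and b=b and f=f and L=L and N=N and M=M and K=K and D=D and \<epsilon>=\<epsilon>, OF dims f_diff eps_diff] lL layer_supp by blast
  have dE: "dE_dy L N M K D w b f \<epsilon> y0 q i m' = G (i, m')" if "(i, m') \<in> ?T" for i m'
  proof -
    have "deriv (\<lambda>t. loss_at L N M K D w b f \<epsilon> q (perturb (layer N M K D w b f q ?Y) i m' t)) 0 = G (i, m')"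
      by (rule DERIV_imp_deriv[OF carat_partial[OF G that finite_bx]])
    then show ?thesis unfolding dE_dy_def Yq .
  qed
  have dq: "N q \<ge> 1 \<and> K q \<ge> 1 \<and> D q \<ge> 1 \<and> M q \<ge> 1 \<and> M q + K q = M (q - 1) + 1"
    using dims[OF lL(3) lL(2)] .
  then have MK: "M q + K q = M (q - 1) + 1" and K1: "K q \<ge> 1" and M1: "M q \<ge> 1" by simp_all
  have fd: "\<And>i x. 1 \<le> i \<Longrightarrow> i \<le> N q \<Longrightarrow> f q i differentiable (at x)"
    using f_diff lL by simp
  have LC: "carat ?S (\<lambda>Z. layer N M K D w b f q Z (fst t) (snd t)) ?Y
      (Jl N M K D w b f q ?Y t)" if "t \<in> ?T" for t
    using layer_carat[where q=q and M=M and K=K and N=N and f=f and D=D and w=w and b=b and Y="?Y",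
       OF MK fd that] unfolding Jl_def q1 by simp
  have CH: "carat ?S (\<lambda>Z. loss_at L N M K D w b f \<epsilon> q (layer N M K D w b f q Z)) ?Y
      (\<lambda>s. \<Sum>t\<in>?T. G t * Jl N M K D w b f q ?Y t s)"
    by (rule carat_chain[OF finite_bx finite_bx G LC layer_supp])
  have CH2: "carat ?S (loss_at L N M K D w b f \<epsilon> l) ?Y
      (\<lambda>s. \<Sum>t\<in>?T. G t * Jl N M K D w b f q ?Y t s)"
    using CH loss_step[OF lL(1)] unfolding qS by simp
  have jm: "(j, m) \<in> ?S" using j m unfolding bx_def by simp
  have DV: "((\<lambda>t. loss_at L N M K D w b f \<epsilon> l (perturb ?Y j m t)) has_real_derivative
      (\<Sum>t\<in>?T. G t * Jl N M K D w b f q ?Y t (j, m))) (at 0)"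
    using carat_partial[OF CH2 jm finite_bx] by simp
  define fp where "fp i m' = deriv (f q i) (pre_act N K D w b q ?Y i m')" for i m'
  define E where "E i m' = dE_dx L N M K D w b f \<epsilon> y0 q i m'" for i m'
  have E: "E i m' = G (i, m') * fp i m'" if "(i, m') \<in> ?T" for i m'
    unfolding E_def dE_dx_def fp_def q1 dE[OF that] ..
  have mq: "m < M q + K q - 1" using m MK q1 by simp
  have eqn: "(\<Sum>d=1..D q. real d *
             (\<Sum>i=1..N q.
                conv (K q)
                  (\<lambda>k. w q i j d (K q - 1 - k))
                  (\<lambda>n. if K q - 1 \<le> n \<and> n \<le> M q + K q - 2
                       then dE_dx L N M K D w b f \<epsilon> y0 q i (n - (K q - 1))
                       else 0)
                  m)
             * (outputs N M K D w b f y0 l j m) ^ (d - 1))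
       = (\<Sum>t\<in>?T. G t * Jl N M K D w b f q ?Y t (j, m))"
  proof -
    have "(\<Sum>d=1..D q. real d *
             (\<Sum>i=1..N q.
                conv (K q)
                  (\<lambda>k. w q i j d (K q - 1 - k))
                  (\<lambda>n. if K q - 1 \<le> n \<and> n \<le> M q + K q - 2
                       then dE_dx L N M K D w b f \<epsilon> y0 q i (n - (K q - 1))
                       else 0)
                  m)
             * (?Y j m) ^ (d - 1))
      = (\<Sum>d=1..D q. real d *
             (\<Sum>i=1..N q. \<Sum>m'<M q. if m' \<le> m \<and> m < m' + K q then w q i j d (m - m') * E i m' else 0)
             * (?Y j m) ^ (d - 1))"
      unfolding E_def by (simp only: conv_reindex[OF K1 M1 mq])
    also have "\<dots> = (\<Sum>d=1..D q. \<Sum>t\<in>?T.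
         (if snd t \<le> m \<and> m < snd t + K q then real d * (w q (fst t) j d (m - snd t) * E (fst t) (snd t)) * (?Y j m) ^ (d - 1) else 0))"
      unfolding bx_def
      apply (simp add: sum.cartesian_product case_prod_beta sum_distrib_left sum_distrib_right if_distrib if_distribR)
      apply (rule sum.cong[OF refl])
      by auto
    also have "\<dots> = (\<Sum>t\<in>?T. \<Sum>d=1..D q.
         (if snd t \<le> m \<and> m < snd t + K q then real d * (w q (fst t) j d (m - snd t) * E (fst t) (snd t)) * (?Y j m) ^ (d - 1) else 0))"
      by (rule sum.swap)
    also have "\<dots> = (\<Sum>t\<in>?T. G t * Jl N M K D w b f q ?Y t (j, m))"
    proof (rule sum.cong[OF refl])
      fix t assume t: "t \<in> ?T"
      obtain i m' where tt: "t = (i, m')" by fastforce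
      show "(\<Sum>d=1..D q.
         (if snd t \<le> m \<and> m < snd t + K q then real d * (w q (fst t) j d (m - snd t) * E (fst t) (snd t)) * (?Y j m) ^ (d - 1) else 0))
         = G t * Jl N M K D w b f q ?Y t (j, m)"
      proof (cases "m' \<le> m \<and> m < m' + K q")
        case True
        then show ?thesis unfolding tt fst_conv snd_conv Jl_def E[OF t[unfolded tt]] fp_def if_P[OF True]
          by (simp add: sum_distrib_left mult_ac)
      next
        case False
        then show ?thesis unfolding tt fst_conv snd_conv Jl_def E[OF t[unfolded tt]] fp_def if_not_P[OF False]
          by simp
      qed
    qed
    finally show ?thesis .
  qed
  show ?thesis unfolding q_def[symmetric] eqn using DV .
qed

end
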